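(* Let $q$ be a prime power, let $\alpha,\beta\in\mathbb{F}_q\setminus\{0\}$, let $x_1,\dots,x_L\in\mathbb{F}_q^n$ be pairwise distinct and let $y_1,\dots,y_L\in\mathbb{F}_q^n$ be pairwise distinct. If $L\ge(\Gamma_q)^n$, then there exist $i,i',i''\in[L]$ with $i\ne i'$, $i\ne i''$ and $\alpha x_i+\beta y_i=\alpha x_{i'}+\beta y_{i''}$.
   Context: For an integer $t\ge2$ let $J(t)=\frac1t\min_{0<x<1}\frac{1+x+\cdots+x^{t-1}}{x^{(t-1)/3}}$, and for a prime power $q$ let $\Gamma_q:=q\,J(q)$ (so $\Gamma_q<0.945q$). *)

theory Defs
  imports "HOL-Analysis.Analysis"
begin

text \<open>J(t) = (1/t) * min over 0<x<1 of (1 + x + ... + x^(t-1)) / x^((t-1)/3).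
  The minimum is attained; we write it as an infimum over the open interval.\<close>
definition J :: "nat \<Rightarrow> real" where
  "J t = (1 / real t) *
     (INF x\<in>{0<..<(1::real)}. (\<Sum>k<t. x ^ k) / x powr ((real t - 1) / 3))"

definition Gamma_q :: "nat \<Rightarrow> real" where
  "Gamma_q q = real q * J q"

end

theory Submission
  imports Defs "HOL-Computational_Algebra.Polynomial" "HOL-Library.FuncSet" "HOL-Library.Cardinality"
begin

lemma fiber_count:
  fixes \<Phi> :: "'x \<Rightarrow> 'z"
  assumes "finite X" "finite Z" "\<Phi> ` X \<subseteq> Z" "finite K"
    and dK: "\<And>h h0. h \<in> X \<Longrightarrow> h0 \<in> X \<Longrightarrow> \<Phi> h = \<Phi> h0 \<Longrightarrow> d h h0 \<in> K"
    and dinj: "\<And>h h' h0. h \<in> X \<Longrightarrow> h' \<in> X \<Longrightarrow> h0 \<in> X \<Longrightarrow> d h h0 = d h' h0 \<Longrightarrow> h = h'"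
  shows "card X \<le> card Z * card K"
proof -
  have X: "X = (\<Union>z\<in>Z. {h\<in>X. \<Phi> h = z})" using assms(3) by auto
  have "card X \<le> (\<Sum>z\<in>Z. card {h\<in>X. \<Phi> h = z})"
    by (subst X) (rule card_UN_le[OF assms(2)])
  also have "\<dots> \<le> (\<Sum>z\<in>Z. card K)"
  proof (rule sum_mono)
    fix z assume "z \<in> Z"
    show "card {h\<in>X. \<Phi> h = z} \<le> card K"
    proof (cases "{h\<in>X. \<Phi> h = z} = {}")
      case True then show ?thesis by (metis card.empty zero_le)
    next
      case False
      then obtain h0 where h0: "h0 \<in> X" "\<Phi> h0 = z" by auto
      have "inj_on (\<lambda>h. d h h0) {h\<in>X. \<Phi> h = z}"
        using dinj h0 by (auto simp: inj_on_def)
      moreover have "(\<lambda>h. d h h0) ` {h\<in>X. \<Phi> h = z} \<subseteq> K" using dK h0 by auto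
      ultimately show ?thesis using card_inj_on_le assms(4) by blast
    qed
  qed
  also have "\<dots> = card Z * card K" by simp
  finally show ?thesis .
qed

lemma card_funs: "finite P \<Longrightarrow> card (P \<rightarrow>\<^sub>E (UNIV::'F::finite set)) = CARD('F) ^ card P"
  by (simp add: card_PiE)

lemma kernel_big:
  fixes l :: "'c \<Rightarrow> 'p \<Rightarrow> 'F::{field,finite}"
  assumes P: "finite P" and A: "finite A"
  shows "CARD('F)^card P \<le> CARD('F)^card A *
           card {h \<in> P \<rightarrow>\<^sub>E UNIV. \<forall>\<alpha>\<in>A. (\<Sum>p\<in>P. h p * l \<alpha> p) = 0}"
proof -
  let ?X = "P \<rightarrow>\<^sub>E (UNIV::'F set)"
  let ?K = "{h \<in> P \<rightarrow>\<^sub>E UNIV. \<forall>\<alpha>\<in>A. (\<Sum>p\<in>P. h p * l \<alpha> p) = 0}"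
  let ?\<Phi> = "\<lambda>h. restrict (\<lambda>\<alpha>. \<Sum>p\<in>P. h p * l \<alpha> p) A"
  let ?d = "\<lambda>h h0. restrict (\<lambda>p. h p - h0 p) P"
  have "card ?X \<le> card (A \<rightarrow>\<^sub>E (UNIV::'F set)) * card ?K"
  proof (rule fiber_count[where \<Phi> = ?\<Phi> and d = ?d])
    show "finite ?X" using P by (simp add: finite_PiE)
    show "finite (A \<rightarrow>\<^sub>E (UNIV::'F set))" using A by (simp add: finite_PiE)
    show "?\<Phi> ` ?X \<subseteq> A \<rightarrow>\<^sub>E UNIV" by auto
    show "finite ?K" using P by (simp add: finite_PiE)
    fix h h0 assume h: "h \<in> ?X" "h0 \<in> ?X" "?\<Phi> h = ?\<Phi> h0"
    show "?d h h0 \<in> ?K"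
    proof -
      have "(\<Sum>p\<in>P. ?d h h0 p * l \<alpha> p) = 0" if "\<alpha> \<in> A" for \<alpha>
      proof -
        have e: "(\<Sum>p\<in>P. h p * l \<alpha> p) = (\<Sum>p\<in>P. h0 p * l \<alpha> p)"
          using fun_cong[OF h(3), of \<alpha>] that by simp
        have "(\<Sum>p\<in>P. ?d h h0 p * l \<alpha> p) = (\<Sum>p\<in>P. h p * l \<alpha> p - h0 p * l \<alpha> p)"
          by (rule sum.cong) (auto simp: algebra_simps)
        also have "\<dots> = 0" using e by (simp add: sum_subtractf)
        finally show ?thesis .
      qed
      then show ?thesis by auto
    qed
  next
    fix h h' h0 assume h: "h \<in> ?X" "h' \<in> ?X" "h0 \<in> ?X" "?d h h0 = ?d h' h0"
    show "h = h'"
    proof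
      fix p show "h p = h' p"
      proof (cases "p \<in> P")
        case True then show ?thesis using fun_cong[OF h(4), of p] by simp
      next
        case False then show ?thesis using h(1,2) by (auto simp: PiE_def extensional_def)
      qed
    qed
  qed
  then show ?thesis using P A by (simp add: card_funs)
qed

lemma card_field_ge2: "2 \<le> CARD('F::{field,finite})"
proof -
  have "{0::'F, 1} \<subseteq> UNIV" by simp
  then have "card {0::'F,1} \<le> CARD('F)" by (intro card_mono) auto
  then show ?thesis by simp
qed

lemma slice_rank:
  fixes T :: "'p \<Rightarrow> 'p \<Rightarrow> 'p \<Rightarrow> 'F::{field,finite}"
    and f :: "'a \<Rightarrow> 'p \<Rightarrow> 'F" and g :: "'a \<Rightarrow> 'p \<Rightarrow> 'p \<Rightarrow> 'F"
    and f' :: "'b \<Rightarrow> 'p \<Rightarrow> 'F" and g' :: "'b \<Rightarrow> 'p \<Rightarrow> 'p \<Rightarrow> 'F"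
    and f'' :: "'c \<Rightarrow> 'p \<Rightarrow> 'F" and g'' :: "'c \<Rightarrow> 'p \<Rightarrow> 'p \<Rightarrow> 'F"
  assumes P: "finite P" and A: "finite A" and B: "finite B" and C: "finite C"
    and diag: "\<And>i j k. i\<in>P \<Longrightarrow> j\<in>P \<Longrightarrow> k\<in>P \<Longrightarrow> T i j k = (if i = j \<and> j = k then 1 else 0)"
    and dec: "\<And>i j k. i\<in>P \<Longrightarrow> j\<in>P \<Longrightarrow> k\<in>P \<Longrightarrow> T i j k =
       (\<Sum>a\<in>A. f a i * g a j k) + (\<Sum>b\<in>B. f' b j * g' b i k) + (\<Sum>c\<in>C. f'' c k * g'' c i j)"
  shows "card P \<le> card A + card B + card C"
proof -
  define q where "q = CARD('F)"
  have q2: "2 \<le> q" unfolding q_def by (rule card_field_ge2)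
  define V where "V = {h \<in> P \<rightarrow>\<^sub>E (UNIV::'F set). \<forall>a\<in>A. (\<Sum>p\<in>P. h p * f a p) = 0}"
  define supp where "supp h = {p\<in>P. h p \<noteq> (0::'F)}" for h :: "'p \<Rightarrow> 'F"
  have finV: "finite V" unfolding V_def using P by (simp add: finite_PiE)
  have z0V: "restrict (\<lambda>_. 0) P \<in> V" unfolding V_def by auto
  define mx where "mx = Max ((\<lambda>h. card (supp h)) ` V)"
  have "mx \<in> (\<lambda>h. card (supp h)) ` V"
    unfolding mx_def using finV z0V by (intro Max_in) auto
  then obtain v where vV: "v \<in> V" and vmx: "card (supp v) = mx" by auto
  have vmax: "card (supp w) \<le> card (supp v)" if "w \<in> V" for w
    using vmx Max_ge[of "(\<lambda>h. card (supp h)) ` V"] finV that unfolding mx_def by auto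
  define S where "S = supp v"
  have SP: "S \<subseteq> P" unfolding S_def supp_def by auto
  have finS: "finite S" using SP P finite_subset by blast
  have vS: "v k \<noteq> 0" if "k \<in> S" for k using that unfolding S_def supp_def by auto
  have vnS: "v k = 0" if "k \<in> P" "k \<notin> S" for k using that unfolding S_def supp_def by auto
  have vE: "v \<in> P \<rightarrow>\<^sub>E UNIV" and vA: "\<And>a. a \<in> A \<Longrightarrow> (\<Sum>p\<in>P. v p * f a p) = 0"
    using vV unfolding V_def by auto
  have claim1: "card P \<le> card A + card S"
  proof (rule ccontr)
    assume "\<not> ?thesis"
    then have lt: "card A + card S < card P" by simp
    define A' where "A' = Inl ` A \<union> Inr ` S"
    define l where "l = (\<lambda>x p. case x of Inl a \<Rightarrow> f a p | Inr s \<Rightarrow> (if p = s then 1 else (0::'F)))"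
    have finA': "finite A'" unfolding A'_def using A finS by simp
    have cA': "card A' = card A + card S"
      unfolding A'_def using A finS
      by (subst card_Un_disjoint) (auto simp: card_image)
    define W where "W = {h \<in> P \<rightarrow>\<^sub>E UNIV. \<forall>\<alpha>\<in>A'. (\<Sum>p\<in>P. h p * l \<alpha> p) = 0}"
    have kb: "q^card P \<le> q^card A' * card W"
      unfolding W_def q_def by (rule kernel_big[OF P finA'])
    have "q^card A' * q \<le> q^card P"
    proof -
      have "q^card A' * q = q^(Suc (card A'))" by simp
      also have "\<dots> \<le> q^card P" using lt cA' q2 by (intro power_increasing) auto
      finally show ?thesis .
    qed
    with kb have "q^card A' * q \<le> q^card A' * card W" by linarith
    then have "q \<le> card W" using q2 by simp
    then have cW: "2 \<le> card W" using q2 by simp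
    have "\<exists>w\<in>W. w \<noteq> restrict (\<lambda>_. 0) P"
    proof (rule ccontr)
      assume "\<not> ?thesis"
      then have "W \<subseteq> {restrict (\<lambda>_. 0) P}" by auto
      then have "card W \<le> card {restrict (\<lambda>_. 0) P}" using card_mono[of "{restrict (\<lambda>_. 0) P}" W] by simp
      then have "card W \<le> 1" by simp
      with cW show False by simp
    qed
    then obtain w where wW: "w \<in> W" and wnz: "w \<noteq> restrict (\<lambda>_. 0) P" by blast
    have wE: "w \<in> P \<rightarrow>\<^sub>E UNIV" using wW unfolding W_def by auto
    have wA': "(\<Sum>p\<in>P. w p * l \<alpha> p) = 0" if "\<alpha> \<in> A'" for \<alpha>
      using wW that unfolding W_def by auto
    have wA: "(\<Sum>p\<in>P. w p * f a p) = 0" if "a \<in> A" for a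
      using wA'[of "Inl a"] that unfolding A'_def l_def by auto
    have wS: "w s = 0" if "s \<in> S" for s
    proof -
      have "(\<Sum>p\<in>P. w p * l (Inr s) p) = 0" using wA'[of "Inr s"] that unfolding A'_def by auto
      moreover have "(\<Sum>p\<in>P. w p * l (Inr s) p) = w s"
        using that SP P by (simp add: l_def if_distrib cong: if_cong) (auto simp: sum.delta)
      ultimately show ?thesis by simp
    qed
    obtain p0 where p0: "p0 \<in> P" "w p0 \<noteq> 0"
    proof (rule ccontr)
      assume "\<not> thesis"
      then have "\<forall>p\<in>P. w p = 0" using that by blast
      then have "w = restrict (\<lambda>_. 0) P" using wE by (auto simp: PiE_def extensional_def)
      with wnz show False by simp
    qed
    define v' where "v' = restrict (\<lambda>p. v p + w p) P"
    have v'V: "v' \<in> V"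
    proof -
      have "(\<Sum>p\<in>P. v' p * f a p) = 0" if "a \<in> A" for a
      proof -
        have "(\<Sum>p\<in>P. v' p * f a p) = (\<Sum>p\<in>P. v p * f a p + w p * f a p)"
          unfolding v'_def by (rule sum.cong) (auto simp: algebra_simps)
        also have "\<dots> = 0" using vA[OF that] wA[OF that] by (simp add: sum.distrib)
        finally show ?thesis .
      qed
      then show ?thesis unfolding V_def v'_def by auto
    qed
    have p0S: "p0 \<notin> S" using wS p0 by auto
    have "insert p0 S \<subseteq> supp v'"
      unfolding supp_def v'_def using p0 p0S SP vS wS vnS by auto
    moreover have "finite (supp v')" unfolding supp_def using P by simp
    ultimately have "card (insert p0 S) \<le> card (supp v')" by (rule card_mono[rotated])
    then have "card S < card (supp v')" using p0S finS by simp
    with vmax[OF v'V] show False unfolding S_def by simp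
  qed
  define G where "G b k = (\<Sum>i\<in>P. v i * g' b i k)" for b k
  define H where "H c j = (\<Sum>i\<in>P. v i * g'' c i j)" for c j
  have col: "(if j = k then v j else 0) = (\<Sum>b\<in>B. f' b j * G b k) + (\<Sum>c\<in>C. H c j * f'' c k)"
    if j: "j \<in> P" and k: "k \<in> P" for j k
  proof -
    have "(\<Sum>i\<in>P. v i * T i j k) = (\<Sum>i\<in>P. v i * (if i = j \<and> j = k then 1 else 0))"
      using j k by (intro sum.cong) (auto simp: diag)
    also have "\<dots> = (if j = k then v j else 0)" using j P
      by (auto simp: if_distrib cong: if_cong)
    finally have e1: "(\<Sum>i\<in>P. v i * T i j k) = (if j = k then v j else 0)" .
    have "(\<Sum>i\<in>P. v i * T i j k) = (\<Sum>i\<in>P. v i * ((\<Sum>a\<in>A. f a i * g a j k) + (\<Sum>b\<in>B. f' b j * g' b i k) + (\<Sum>c\<in>C. f'' c k * g'' c i j)))"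
      using j k by (intro sum.cong) (auto simp: dec)
    also have "\<dots> = (\<Sum>i\<in>P. v i * (\<Sum>a\<in>A. f a i * g a j k)) + (\<Sum>i\<in>P. v i * (\<Sum>b\<in>B. f' b j * g' b i k)) + (\<Sum>i\<in>P. v i * (\<Sum>c\<in>C. f'' c k * g'' c i j))"
      by (simp add: distrib_left sum.distrib)
    also have "(\<Sum>i\<in>P. v i * (\<Sum>a\<in>A. f a i * g a j k)) = (\<Sum>a\<in>A. (\<Sum>i\<in>P. v i * f a i) * g a j k)"
      by (simp add: sum_distrib_left sum_distrib_right sum.swap[of _ P] mult_ac)
    also have "\<dots> = 0" using vA by simp
    also have "(\<Sum>i\<in>P. v i * (\<Sum>b\<in>B. f' b j * g' b i k)) = (\<Sum>b\<in>B. f' b j * G b k)"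
      unfolding G_def by (simp add: sum_distrib_left sum_distrib_right sum.swap[of _ P] mult_ac)
    also have "(\<Sum>i\<in>P. v i * (\<Sum>c\<in>C. f'' c k * g'' c i j)) = (\<Sum>c\<in>C. H c j * f'' c k)"
      unfolding H_def by (simp add: sum_distrib_left sum_distrib_right sum.swap[of _ P] mult_ac)
    finally show ?thesis using e1 by simp
  qed
  define U where "U = (\<lambda>(cc,dd). restrict (\<lambda>j. (\<Sum>b\<in>B. cc b * f' b j) + (\<Sum>c\<in>C. dd c * H c j)) P) `
      ((B \<rightarrow>\<^sub>E (UNIV::'F set)) \<times> (C \<rightarrow>\<^sub>E (UNIV::'F set)))"
  have cU: "card U \<le> q^card B * q^card C"
  proof -
    have "card U \<le> card ((B \<rightarrow>\<^sub>E (UNIV::'F set)) \<times> (C \<rightarrow>\<^sub>E (UNIV::'F set)))"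
      unfolding U_def by (rule card_image_le) (simp add: B C finite_PiE)
    also have "\<dots> = q^card B * q^card C"
      by (simp add: card_cartesian_product card_funs B C q_def)
    finally show ?thesis .
  qed
  define \<Psi> where "\<Psi> lam = restrict (\<lambda>j. \<Sum>k\<in>S. lam k * (if j = k then v j else 0)) P" for lam :: "'p \<Rightarrow> 'F"
  have PsiU: "\<Psi> ` (S \<rightarrow>\<^sub>E UNIV) \<subseteq> U"
  proof
    fix u assume "u \<in> \<Psi> ` (S \<rightarrow>\<^sub>E UNIV)"
    then obtain lam where u: "u = \<Psi> lam" by auto
    define cc where "cc = restrict (\<lambda>b. \<Sum>k\<in>S. lam k * G b k) B"
    define dd where "dd = restrict (\<lambda>c. \<Sum>k\<in>S. lam k * f'' c k) C"
    have "u = restrict (\<lambda>j. (\<Sum>b\<in>B. cc b * f' b j) + (\<Sum>c\<in>C. dd c * H c j)) P"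
    proof
      fix j show "u j = restrict (\<lambda>j. (\<Sum>b\<in>B. cc b * f' b j) + (\<Sum>c\<in>C. dd c * H c j)) P j"
      proof (cases "j \<in> P")
        case True
        have "u j = (\<Sum>k\<in>S. lam k * ((\<Sum>b\<in>B. f' b j * G b k) + (\<Sum>c\<in>C. H c j * f'' c k)))"
          unfolding u \<Psi>_def using True SP by (auto intro!: sum.cong simp: col)
        also have "\<dots> = (\<Sum>b\<in>B. cc b * f' b j) + (\<Sum>c\<in>C. dd c * H c j)"
          unfolding cc_def dd_def
          by (simp add: distrib_left sum.distrib sum_distrib_left sum_distrib_right sum.swap[of _ S] mult_ac)
        finally show ?thesis using True by simp
      qed (simp add: u \<Psi>_def)
    qed
    moreover have "(cc, dd) \<in> (B \<rightarrow>\<^sub>E (UNIV::'F set)) \<times> (C \<rightarrow>\<^sub>E (UNIV::'F set))"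
      unfolding cc_def dd_def by auto
    ultimately show "u \<in> U" unfolding U_def by force
  qed
  have Psi_at: "\<Psi> lam j = lam j * v j" if "j \<in> S" for lam j
    using that SP finS by (auto simp: \<Psi>_def if_distrib cong: if_cong)
  have injPsi: "inj_on \<Psi> (S \<rightarrow>\<^sub>E UNIV)"
  proof (rule inj_onI)
    fix l1 l2 assume l: "l1 \<in> S \<rightarrow>\<^sub>E UNIV" "l2 \<in> S \<rightarrow>\<^sub>E UNIV" "\<Psi> l1 = \<Psi> l2"
    show "l1 = l2"
    proof
      fix j show "l1 j = l2 j"
      proof (cases "j \<in> S")
        case True
        then have "l1 j * v j = l2 j * v j" using Psi_at fun_cong[OF l(3), of j] by metis
        then show ?thesis using vS[OF True] by simp
      next
        case False then show ?thesis using l(1,2) by (auto simp: PiE_def extensional_def)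
      qed
    qed
  qed
  have finU: "finite U" unfolding U_def using B C by (simp add: finite_PiE)
  have "card (S \<rightarrow>\<^sub>E (UNIV::'F set)) \<le> card U"
    by (rule card_inj_on_le[OF injPsi PsiU finU])
  moreover have "card (S \<rightarrow>\<^sub>E (UNIV::'F set)) = q^card S" unfolding q_def by (rule card_funs[OF finS])
  ultimately have "q^card S \<le> q^card B * q^card C" using cU by linarith
  then have "q^card S \<le> q^(card B + card C)" by (simp only: power_add)
  moreover have "1 < q" using q2 by linarith
  ultimately have "card S \<le> card B + card C" using power_le_imp_le_exp by blast
  with claim1 show ?thesis by simp
qed

lemma fermat_ff:
  fixes z :: "'F::{field,finite}"
  assumes "z \<noteq> 0"
  shows "z ^ (CARD('F) - 1) = 1"
proof -
  let ?N = "UNIV - {0::'F}"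
  have inj: "inj_on ((*) z) ?N" using assms by (auto simp: inj_on_def)
  have img: "(*) z ` ?N = ?N"
  proof
    show "(*) z ` ?N \<subseteq> ?N" using assms by auto
    show "?N \<subseteq> (*) z ` ?N"
    proof
      fix y assume "y \<in> ?N"
      then have "y = z * (y / z)" "y / z \<in> ?N" using assms by auto
      then show "y \<in> (*) z ` ?N" by blast
    qed
  qed
  have "prod id ?N = prod id ((*) z ` ?N)" using img by simp
  also have "\<dots> = prod ((*) z) ?N" using prod.reindex[OF inj, of id] by simp
  also have "\<dots> = z ^ card ?N * prod id ?N" by (simp add: prod.distrib)
  finally have e: "prod id ?N = z ^ card ?N * prod id ?N" .
  have "prod id ?N \<noteq> 0" by simp
  with e have "z ^ card ?N = 1" by (metis mult_cancel_right2)
  moreover have "card ?N = CARD('F) - 1" by (simp add: card_Diff_subset)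
  ultimately show ?thesis by simp
qed

lemma delta_ff:
  fixes u :: "'F::{field,finite}"
  shows "1 - u ^ (CARD('F) - 1) = (if u = 0 then 1 else 0)"
proof (cases "u = 0")
  case True
  have "CARD('F) - 1 \<noteq> 0" using card_field_ge2[where 'F='F] by linarith
  then show ?thesis using True by simp
next
  case False then show ?thesis using fermat_ff[of u] by simp
qed

lemma poly_rep:
  fixes N :: nat
  shows "\<exists>(E :: (nat \<Rightarrow> nat) option set) (\<kappa> :: (nat \<Rightarrow> nat) option \<Rightarrow> 'F::comm_ring_1)
    (e1 :: (nat \<Rightarrow> nat) option \<Rightarrow> nat) (e2 :: (nat \<Rightarrow> nat) option \<Rightarrow> nat) (e3 :: (nat \<Rightarrow> nat) option \<Rightarrow> nat).
    finite E \<and> (\<forall>\<tau>\<in>E. e1 \<tau> + e2 \<tau> + e3 \<tau> \<le> N) \<and>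
    (\<forall>u v w. 1 - (u + v + w) ^ N = (\<Sum>\<tau>\<in>E. \<kappa> \<tau> * u ^ e1 \<tau> * v ^ e2 \<tau> * w ^ e3 \<tau>))"
proof -
  define X where "X = {..<N} \<rightarrow>\<^sub>E {0::nat,1,2}"
  define cnt where "cnt c \<sigma> = (\<Sum>r<N. if \<sigma> r = (c::nat) then 1 else (0::nat))" for c \<sigma>
  define E where "E = insert None (Some ` X)"
  define \<kappa> where "\<kappa> (\<tau>::(nat\<Rightarrow>nat) option) = (case \<tau> of None \<Rightarrow> 1 | Some _ \<Rightarrow> - (1::'F))" for \<tau>
  define e1 where "e1 (\<tau>::(nat\<Rightarrow>nat) option) = (case \<tau> of None \<Rightarrow> 0 | Some \<sigma> \<Rightarrow> cnt 0 \<sigma>)" for \<tau>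
  define e2 where "e2 (\<tau>::(nat\<Rightarrow>nat) option) = (case \<tau> of None \<Rightarrow> 0 | Some \<sigma> \<Rightarrow> cnt 1 \<sigma>)" for \<tau>
  define e3 where "e3 (\<tau>::(nat\<Rightarrow>nat) option) = (case \<tau> of None \<Rightarrow> 0 | Some \<sigma> \<Rightarrow> cnt 2 \<sigma>)" for \<tau>
  have finX: "finite X" unfolding X_def by (simp add: finite_PiE)
  have h1: "finite E" unfolding E_def using finX by simp
  have h2: "e1 \<tau> + e2 \<tau> + e3 \<tau> \<le> N" if "\<tau> \<in> E" for \<tau>
  proof -
    from that consider "\<tau> = None" | \<sigma> where "\<sigma> \<in> X" "\<tau> = Some \<sigma>" unfolding E_def by auto
    then show "e1 \<tau> + e2 \<tau> + e3 \<tau> \<le> N"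
    proof cases
      case 1 then show ?thesis by (simp add: e1_def e2_def e3_def)
    next
      case 2
      have "e1 \<tau> + e2 \<tau> + e3 \<tau> = (\<Sum>r<N. (if \<sigma> r = 0 then 1 else 0) + (if \<sigma> r = 1 then 1 else 0) + (if \<sigma> r = 2 then 1 else (0::nat)))"
        using 2 by (simp add: e1_def e2_def e3_def cnt_def sum.distrib)
      also have "\<dots> = (\<Sum>r<N. 1)"
        using 2 by (intro sum.cong) (auto simp: X_def PiE_def Pi_def)
      finally show ?thesis by simp
    qed
  qed
  have h3: "1 - (u + v + w) ^ N = (\<Sum>\<tau>\<in>E. \<kappa> \<tau> * u ^ e1 \<tau> * v ^ e2 \<tau> * w ^ e3 \<tau>)" for u v w :: 'F
  proof -
    define val where "val c = (if c = 0 then u else if c = 1 then v else w)" for c :: nat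
    have vs: "(\<Sum>c\<in>{0::nat,1,2}. val c) = u + v + w" by (simp add: val_def add.assoc)
    have "(u + v + w) ^ N = (\<Prod>r<N. \<Sum>c\<in>{0::nat,1,2}. val c)"
      unfolding vs by simp
    also have "\<dots> = (\<Sum>\<sigma>\<in>X. \<Prod>r<N. val (\<sigma> r))"
      unfolding X_def by (rule prod_sum_PiE) auto
    also have "\<dots> = (\<Sum>\<sigma>\<in>X. u ^ cnt 0 \<sigma> * v ^ cnt 1 \<sigma> * w ^ cnt 2 \<sigma>)"
    proof (rule sum.cong[OF refl])
      fix \<sigma> assume "\<sigma> \<in> X"
      then have s: "\<sigma> r \<in> {0,1,2}" if "r < N" for r
        using that unfolding X_def by (simp add: PiE_iff)
      have "(\<Prod>r<N. val (\<sigma> r)) = (\<Prod>r<N. u ^ (if \<sigma> r = 0 then 1 else 0) * v ^ (if \<sigma> r = 1 then 1 else 0) * w ^ (if \<sigma> r = 2 then 1 else 0))"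
      proof (rule prod.cong[OF refl])
        fix r assume "r \<in> {..<N}"
        then have "\<sigma> r = 0 \<or> \<sigma> r = 1 \<or> \<sigma> r = 2" using s by auto
        then show "val (\<sigma> r) = u ^ (if \<sigma> r = 0 then 1 else 0) * v ^ (if \<sigma> r = 1 then 1 else 0) * w ^ (if \<sigma> r = 2 then 1 else 0)"
          by (elim disjE) (simp_all add: val_def)
      qed
      also have "\<dots> = u ^ cnt 0 \<sigma> * v ^ cnt 1 \<sigma> * w ^ cnt 2 \<sigma>"
        unfolding cnt_def power_sum prod.distrib by (rule refl)
      finally show "(\<Prod>r<N. val (\<sigma> r)) = u ^ cnt 0 \<sigma> * v ^ cnt 1 \<sigma> * w ^ cnt 2 \<sigma>" .
    qed
    finally have e: "(u + v + w) ^ N = (\<Sum>\<sigma>\<in>X. u ^ cnt 0 \<sigma> * v ^ cnt 1 \<sigma> * w ^ cnt 2 \<sigma>)" .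
    have "(\<Sum>\<tau>\<in>E. \<kappa> \<tau> * u ^ e1 \<tau> * v ^ e2 \<tau> * w ^ e3 \<tau>) =
          1 + (\<Sum>\<tau>\<in>Some ` X. \<kappa> \<tau> * u ^ e1 \<tau> * v ^ e2 \<tau> * w ^ e3 \<tau>)"
      unfolding E_def using finX by (simp add: \<kappa>_def e1_def e2_def e3_def)
    also have "(\<Sum>\<tau>\<in>Some ` X. \<kappa> \<tau> * u ^ e1 \<tau> * v ^ e2 \<tau> * w ^ e3 \<tau>) =
        (\<Sum>\<sigma>\<in>X. - (u ^ cnt 0 \<sigma> * v ^ cnt 1 \<sigma> * w ^ cnt 2 \<sigma>))"
      by (subst sum.reindex) (auto simp: \<kappa>_def e1_def e2_def e3_def)
    also have "\<dots> = -((u + v + w) ^ N)" using e by (simp add: sum_negf)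
    finally show ?thesis by simp
  qed
  show ?thesis
    by (intro exI[of _ E] exI[of _ \<kappa>] exI[of _ e1] exI[of _ e2] exI[of _ e3] conjI ballI allI h1 h2 h3)
qed

lemma group_factor:
  fixes F :: "'e \<Rightarrow> 'r::comm_semiring_1"
  assumes "finite S" "finite M" "g ` S \<subseteq> M"
  shows "(\<Sum>\<sigma>\<in>S. F (g \<sigma>) * H \<sigma>) = (\<Sum>e\<in>M. F e * (\<Sum>\<sigma>\<in>{\<sigma>\<in>S. g \<sigma> = e}. H \<sigma>))"
proof -
  have "(\<Sum>e\<in>M. F e * (\<Sum>\<sigma>\<in>{\<sigma>\<in>S. g \<sigma> = e}. H \<sigma>)) = (\<Sum>e\<in>M. \<Sum>\<sigma>\<in>{\<sigma>\<in>S. g \<sigma> = e}. F (g \<sigma>) * H \<sigma>)"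
    by (intro sum.cong refl) (simp add: sum_distrib_left)
  also have "\<dots> = (\<Sum>\<sigma>\<in>S. F (g \<sigma>) * H \<sigma>)"
    by (rule sum.group[OF assms])
  finally show ?thesis by simp
qed

lemma prod_indicator:
  fixes z :: "'i \<Rightarrow> 'F::field"
  assumes "finite I"
  shows "(\<Prod>t\<in>I. if z t = 0 then 1 else 0) = (if \<forall>t\<in>I. z t = 0 then (1::'F) else 0)"
proof (cases "\<forall>t\<in>I. z t = 0")
  case True then show ?thesis by simp
next
  case False
  then obtain t where "t \<in> I" "z t \<noteq> 0" by blast
  then show ?thesis using assms False by (simp add: prod_zero_iff)
qed

lemma tricolor_bound:
  fixes a b c :: "'p \<Rightarrow> 'i \<Rightarrow> 'F::{field,finite}"
  assumes P: "finite P" and I: "finite I"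
    and tri: "\<And>i j k. i\<in>P \<Longrightarrow> j\<in>P \<Longrightarrow> k\<in>P \<Longrightarrow> (\<forall>t\<in>I. a i t + b j t + c k t = 0) \<longleftrightarrow> (i = j \<and> j = k)"
  shows "card P \<le> 3 * card {e \<in> I \<rightarrow>\<^sub>E {..<CARD('F)}. 3 * (\<Sum>t\<in>I. e t) \<le> (CARD('F) - 1) * card I}"
proof -
  define q where "q = CARD('F)"
  have q2: "2 \<le> q" unfolding q_def by (rule card_field_ge2)
  define N where "N = q - 1"
  have "\<exists>(E :: (nat \<Rightarrow> nat) option set) (\<kappa> :: (nat \<Rightarrow> nat) option \<Rightarrow> 'F)
    (e1 :: (nat \<Rightarrow> nat) option \<Rightarrow> nat) (e2 :: (nat \<Rightarrow> nat) option \<Rightarrow> nat) (e3 :: (nat \<Rightarrow> nat) option \<Rightarrow> nat).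
    finite E \<and> (\<forall>\<tau>\<in>E. e1 \<tau> + e2 \<tau> + e3 \<tau> \<le> N) \<and>
    (\<forall>u v w. 1 - (u + v + w) ^ N = (\<Sum>\<tau>\<in>E. \<kappa> \<tau> * u ^ e1 \<tau> * v ^ e2 \<tau> * w ^ e3 \<tau>))"
    by (rule poly_rep)
  then obtain E :: "(nat \<Rightarrow> nat) option set" and \<kappa> :: "(nat \<Rightarrow> nat) option \<Rightarrow> 'F" and e1 e2 e3
    where E: "finite E" and Ee: "\<forall>\<tau>\<in>E. e1 \<tau> + e2 \<tau> + e3 \<tau> \<le> N"
      and rep: "\<forall>u v w. 1 - (u + v + w) ^ N = (\<Sum>\<tau>\<in>E. \<kappa> \<tau> * u ^ e1 \<tau> * v ^ e2 \<tau> * w ^ e3 \<tau>)"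
    by blast
  define T where "T i j k = (\<Prod>t\<in>I. 1 - (a i t + b j t + c k t) ^ N)" for i j k
  have diag: "T i j k = (if i = j \<and> j = k then 1 else 0)" if "i\<in>P" "j\<in>P" "k\<in>P" for i j k
  proof -
    have "T i j k = (\<Prod>t\<in>I. if a i t + b j t + c k t = 0 then 1 else 0)"
      unfolding T_def N_def q_def by (intro prod.cong refl) (rule delta_ff)
    also have "\<dots> = (if \<forall>t\<in>I. a i t + b j t + c k t = 0 then 1 else 0)"
      by (rule prod_indicator[OF I])
    also have "\<dots> = (if i = j \<and> j = k then 1 else 0)" using tri[OF that] by simp
    finally show ?thesis .
  qed
  define Sg where "Sg = I \<rightarrow>\<^sub>E E"
  define K where "K \<sigma> = (\<Prod>t\<in>I. \<kappa> (\<sigma> t))" for \<sigma>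
  define mono where "mono e x = (\<Prod>t\<in>I. (x t :: 'F) ^ e t)" for e :: "'i \<Rightarrow> nat" and x
  define eA where "eA \<sigma> = restrict (\<lambda>t. e1 (\<sigma> t)) I" for \<sigma> :: "'i \<Rightarrow> (nat \<Rightarrow> nat) option"
  define eB where "eB \<sigma> = restrict (\<lambda>t. e2 (\<sigma> t)) I" for \<sigma> :: "'i \<Rightarrow> (nat \<Rightarrow> nat) option"
  define eC where "eC \<sigma> = restrict (\<lambda>t. e3 (\<sigma> t)) I" for \<sigma> :: "'i \<Rightarrow> (nat \<Rightarrow> nat) option"
  have finSg: "finite Sg" unfolding Sg_def using I E by (simp add: finite_PiE)
  have mono_r: "mono (restrict (\<lambda>t. h (\<sigma> t)) I) x = (\<Prod>t\<in>I. x t ^ h (\<sigma> t))" for h \<sigma> x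
    unfolding mono_def by (intro prod.cong refl) simp
  have expand: "T i j k = (\<Sum>\<sigma>\<in>Sg. K \<sigma> * mono (eA \<sigma>) (a i) * mono (eB \<sigma>) (b j) * mono (eC \<sigma>) (c k))" for i j k
  proof -
    have "T i j k = (\<Prod>t\<in>I. \<Sum>\<tau>\<in>E. \<kappa> \<tau> * a i t ^ e1 \<tau> * b j t ^ e2 \<tau> * c k t ^ e3 \<tau>)"
      unfolding T_def using rep by simp
    also have "\<dots> = (\<Sum>\<sigma>\<in>Sg. \<Prod>t\<in>I. \<kappa> (\<sigma> t) * a i t ^ e1 (\<sigma> t) * b j t ^ e2 (\<sigma> t) * c k t ^ e3 (\<sigma> t))"
      unfolding Sg_def using I E by (rule prod_sum_PiE)
    also have "\<dots> = (\<Sum>\<sigma>\<in>Sg. K \<sigma> * mono (eA \<sigma>) (a i) * mono (eB \<sigma>) (b j) * mono (eC \<sigma>) (c k))"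
      unfolding K_def eA_def eB_def eC_def mono_r prod.distrib by (rule refl)
    finally show ?thesis .
  qed
  define M where "M = {e \<in> I \<rightarrow>\<^sub>E {..<q}. 3 * (\<Sum>t\<in>I. e t) \<le> N * card I}"
  have finM: "finite M" unfolding M_def using I by (simp add: finite_PiE)
  have Nq: "N < q" unfolding N_def using q2 by simp
  have eAin: "eA \<sigma> \<in> I \<rightarrow>\<^sub>E {..<q}" "eB \<sigma> \<in> I \<rightarrow>\<^sub>E {..<q}" "eC \<sigma> \<in> I \<rightarrow>\<^sub>E {..<q}" if "\<sigma> \<in> Sg" for \<sigma>
  proof -
    have "e1 (\<sigma> t) + e2 (\<sigma> t) + e3 (\<sigma> t) \<le> N" if "t \<in> I" for t
      using Ee \<open>\<sigma> \<in> Sg\<close> that unfolding Sg_def by (auto simp: PiE_iff)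
    then have "e1 (\<sigma> t) < q" "e2 (\<sigma> t) < q" "e3 (\<sigma> t) < q" if "t \<in> I" for t
      using Nq that by (meson le_add1 le_add2 le_trans order.strict_trans1 add_leD1)+
    then show "eA \<sigma> \<in> I \<rightarrow>\<^sub>E {..<q}" "eB \<sigma> \<in> I \<rightarrow>\<^sub>E {..<q}" "eC \<sigma> \<in> I \<rightarrow>\<^sub>E {..<q}"
      unfolding eA_def eB_def eC_def by (simp_all add: PiE_iff)
  qed
  have sum3: "(\<Sum>t\<in>I. eA \<sigma> t) + (\<Sum>t\<in>I. eB \<sigma> t) + (\<Sum>t\<in>I. eC \<sigma> t) \<le> N * card I" if "\<sigma> \<in> Sg" for \<sigma>
  proof -
    have "(\<Sum>t\<in>I. eA \<sigma> t) + (\<Sum>t\<in>I. eB \<sigma> t) + (\<Sum>t\<in>I. eC \<sigma> t) = (\<Sum>t\<in>I. e1 (\<sigma> t) + e2 (\<sigma> t) + e3 (\<sigma> t))"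
      unfolding eA_def eB_def eC_def by (simp add: sum.distrib)
    also have "\<dots> \<le> (\<Sum>t\<in>I. N)"
      using Ee that unfolding Sg_def by (intro sum_mono) (auto simp: PiE_iff)
    finally show ?thesis by (simp add: mult.commute)
  qed
  define Cl1 where "Cl1 = {\<sigma>\<in>Sg. eA \<sigma> \<in> M}"
  define Cl2 where "Cl2 = {\<sigma>\<in>Sg. eA \<sigma> \<notin> M \<and> eB \<sigma> \<in> M}"
  define Cl3 where "Cl3 = {\<sigma>\<in>Sg. eA \<sigma> \<notin> M \<and> eB \<sigma> \<notin> M}"
  have C3: "eC \<sigma> \<in> M" if "\<sigma> \<in> Cl3" for \<sigma>
  proof -
    have s: "\<sigma> \<in> Sg" using that unfolding Cl3_def by simp
    have "\<not> 3 * (\<Sum>t\<in>I. eA \<sigma> t) \<le> N * card I" "\<not> 3 * (\<Sum>t\<in>I. eB \<sigma> t) \<le> N * card I"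
      using that eAin[OF s] unfolding Cl3_def M_def by auto
    then have "3 * (\<Sum>t\<in>I. eC \<sigma> t) \<le> N * card I" using sum3[OF s] by linarith
    then show ?thesis using eAin[OF s] unfolding M_def by simp
  qed
  have Sg_split: "Sg = Cl1 \<union> (Cl2 \<union> Cl3)" unfolding Cl1_def Cl2_def Cl3_def by auto
  have fin123: "finite Cl1" "finite Cl2" "finite Cl3" unfolding Cl1_def Cl2_def Cl3_def using finSg by simp_all
  have img: "eA ` Cl1 \<subseteq> M" "eB ` Cl2 \<subseteq> M" "eC ` Cl3 \<subseteq> M" using C3 unfolding Cl1_def Cl2_def by auto
  define g1 where "g1 e j k = (\<Sum>\<sigma>\<in>{\<sigma>\<in>Cl1. eA \<sigma> = e}. K \<sigma> * mono (eB \<sigma>) (b j) * mono (eC \<sigma>) (c k))" for e j k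
  define g2 where "g2 e i k = (\<Sum>\<sigma>\<in>{\<sigma>\<in>Cl2. eB \<sigma> = e}. K \<sigma> * mono (eA \<sigma>) (a i) * mono (eC \<sigma>) (c k))" for e i k
  define g3 where "g3 e i j = (\<Sum>\<sigma>\<in>{\<sigma>\<in>Cl3. eC \<sigma> = e}. K \<sigma> * mono (eA \<sigma>) (a i) * mono (eB \<sigma>) (b j))" for e i j
  have "card P \<le> card M + card M + card M"
  proof (rule slice_rank[OF P finM finM finM, where T = T])
    fix i j k assume "i \<in> P" "j \<in> P" "k \<in> P"
    then show "T i j k = (if i = j \<and> j = k then 1 else 0)" by (rule diag)
  next
    fix i j k
    let ?X = "\<lambda>\<sigma>. K \<sigma> * mono (eA \<sigma>) (a i) * mono (eB \<sigma>) (b j) * mono (eC \<sigma>) (c k)"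
    have "T i j k = sum ?X Cl1 + (sum ?X Cl2 + sum ?X Cl3)"
      unfolding expand Sg_split using fin123
      by (simp add: sum.union_disjoint Cl1_def Cl2_def Cl3_def disjoint_iff)
    also have "sum ?X Cl1 = (\<Sum>e\<in>M. mono e (a i) * g1 e j k)"
    proof -
      have "sum ?X Cl1 = (\<Sum>\<sigma>\<in>Cl1. mono (eA \<sigma>) (a i) * (K \<sigma> * mono (eB \<sigma>) (b j) * mono (eC \<sigma>) (c k)))"
        by (simp add: mult_ac)
      also have "\<dots> = (\<Sum>e\<in>M. mono e (a i) * g1 e j k)"
        unfolding g1_def by (rule group_factor[OF fin123(1) finM img(1)])
      finally show ?thesis .
    qed
    also have "sum ?X Cl2 = (\<Sum>e\<in>M. mono e (b j) * g2 e i k)"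
    proof -
      have "sum ?X Cl2 = (\<Sum>\<sigma>\<in>Cl2. mono (eB \<sigma>) (b j) * (K \<sigma> * mono (eA \<sigma>) (a i) * mono (eC \<sigma>) (c k)))"
        by (simp add: mult_ac)
      also have "\<dots> = (\<Sum>e\<in>M. mono e (b j) * g2 e i k)"
        unfolding g2_def by (rule group_factor[OF fin123(2) finM img(2)])
      finally show ?thesis .
    qed
    also have "sum ?X Cl3 = (\<Sum>e\<in>M. mono e (c k) * g3 e i j)"
    proof -
      have "sum ?X Cl3 = (\<Sum>\<sigma>\<in>Cl3. mono (eC \<sigma>) (c k) * (K \<sigma> * mono (eA \<sigma>) (a i) * mono (eB \<sigma>) (b j)))"
        by (simp add: mult_ac)
      also have "\<dots> = (\<Sum>e\<in>M. mono e (c k) * g3 e i j)"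
        unfolding g3_def by (rule group_factor[OF fin123(3) finM img(3)])
      finally show ?thesis .
    qed
    finally show "T i j k = (\<Sum>e\<in>M. mono e (a i) * g1 e j k) + (\<Sum>e\<in>M. mono e (b j) * g2 e i k) + (\<Sum>e\<in>M. mono e (c k) * g3 e i j)"
      by (simp add: add.assoc)
  qed
  then show ?thesis unfolding M_def N_def q_def by simp
qed

lemma central_binom_bound: "((2*m) choose m)^2 * (2*m+1) \<le> (16::nat)^m"
proof (induction m)
  case 0 show ?case by simp
next
  case (Suc m)
  define C where "C = (2*m) choose m"
  define C' where "C' = (2*Suc m) choose (Suc m)"
  have h1: "Suc m * (Suc (2*m+1) choose Suc m) = Suc (2*m+1) * ((2*m+1) choose m)"
    by (rule Suc_times_binomial)
  have h2: "Suc m * (Suc (2*m) choose Suc m) = Suc (2*m) * ((2*m) choose m)"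
    by (rule Suc_times_binomial)
  have h3: "(Suc (2*m) choose Suc m) = ((2*m+1) choose m)"
    using binomial_symmetric[of m "2*m+1"] by simp
  have c': "C' = Suc (2*m+1) choose Suc m" unfolding C'_def by (simp del: binomial_Suc_Suc)
  have h4: "Suc m * ((2*m+1) choose m) = (2*m+1) * C" using h2 h3 unfolding C_def by (simp del: binomial_Suc_Suc)
  have "Suc m * (Suc m * C') = Suc m * (Suc (2*m+1) * ((2*m+1) choose m))"
    using h1 c' by (simp del: binomial_Suc_Suc)
  also have "\<dots> = Suc (2*m+1) * (Suc m * ((2*m+1) choose m))" by (simp only: mult_ac)
  also have "\<dots> = Suc (2*m+1) * ((2*m+1) * C)" by (simp only: h4)
  also have "\<dots> = Suc m * (2 * (2*m+1) * C)" by (simp del: binomial_Suc_Suc add: algebra_simps)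
  finally have "Suc m * (Suc m * C') = Suc m * (2 * (2*m+1) * C)" .
  then have r: "Suc m * C' = 2 * (2*m+1) * C" by (metis Zero_not_Suc mult_left_cancel)
  have IH: "C^2 * (2*m+1) \<le> 16^m" using Suc.IH unfolding C_def .
  have "(Suc m)^2 * (C'^2 * (2*Suc m+1)) = (Suc m * C')^2 * (2*m+3)" by (simp add: power2_eq_square algebra_simps)
  also have "\<dots> = 4 * (2*m+1) * (2*m+3) * (C^2 * (2*m+1))" unfolding r power2_eq_square by algebra
  also have "\<dots> \<le> 4 * (2*m+1) * (2*m+3) * 16^m" using IH by simp
  also have "4 * (2*m+1) * (2*m+3) \<le> 16 * (Suc m)^2" by (simp add: power2_eq_square algebra_simps)
  then have "4 * (2*m+1) * (2*m+3) * 16^m \<le> 16 * (Suc m)^2 * 16^m" by simp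
  also have "\<dots> = (Suc m)^2 * 16^Suc m" by simp
  finally have "(Suc m)^2 * (C'^2 * (2*Suc m+1)) \<le> (Suc m)^2 * 16^Suc m" .
  then show ?case unfolding C'_def by simp
qed

lemma binom_sq: "(K choose j)^2 * (K+1) \<le> 2 * (4::nat)^K"
proof -
  obtain m where "K = 2*m \<or> K = 2*m+1" by (metis oddE evenE)
  then show ?thesis
  proof
    assume K: "K = 2*m"
    have "(K choose j) \<le> (2*m) choose m" unfolding K by (rule binomial_maximum')
    then have "(K choose j)^2 * (K+1) \<le> ((2*m) choose m)^2 * (2*m+1)"
      unfolding K by (intro mult_le_mono power_mono) auto
    also have "\<dots> \<le> 16^m" by (rule central_binom_bound)
    also have "(16::nat)^m = 4^K" unfolding K by (simp add: power_mult)
    finally show ?thesis by simp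
  next
    assume K: "K = 2*m+1"
    define C where "C = (2*m) choose m"
    have Cpos: "1 \<le> C" unfolding C_def by (simp add: Suc_leI)
    have "(K choose j) \<le> 2 * C"
    proof (cases j)
      case 0 then show ?thesis using Cpos by simp
    next
      case (Suc j')
      have "(K choose j) = ((2*m) choose j') + ((2*m) choose Suc j')" unfolding K Suc by simp
      also have "\<dots> \<le> C + C" unfolding C_def by (intro add_mono binomial_maximum')
      finally show ?thesis by simp
    qed
    then have "(K choose j)^2 * (K+1) \<le> (2*C)^2 * (2*m+2)"
      unfolding K by (intro mult_le_mono power_mono) auto
    also have "\<dots> = 4 * (C^2 * (2*m+2))" by (simp add: power2_eq_square algebra_simps)
    also have "C^2 * (2*m+2) \<le> 2 * (C^2 * (2*m+1))" by (simp add: algebra_simps)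
    also have "C^2 * (2*m+1) \<le> 16^m" unfolding C_def by (rule central_binom_bound)
    finally have "(K choose j)^2 * (K+1) \<le> 8 * 16^m" by simp
    also have "8 * (16::nat)^m = 2 * 4^K" unfolding K by (simp add: power_mult)
    finally show ?thesis .
  qed
qed

lemma binom_sq_real: "(real (K choose j) / 2^K)^2 \<le> 2 / (real K + 1)"
proof -
  have "real ((K choose j)^2 * (K+1)) \<le> real (2 * 4^K)" using binom_sq of_nat_le_iff by blast
  then have "real (K choose j)^2 * (real K + 1) \<le> 2 * 4^K" by (simp add: algebra_simps)
  moreover have "(4::real)^K = (2^K)^2"
  proof -
    have "(2::real)^K * 2^K = (2*2)^K" by (simp only: power_mult_distrib)
    then show ?thesis by (simp add: power2_eq_square)
  qed
  ultimately have "real (K choose j)^2 * (real K + 1) \<le> 2 * (2^K)^2" by simp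
  then show ?thesis by (simp add: power_divide field_simps)
qed

lemma binom_sum1:
  fixes a :: real
  shows "(\<Sum>K\<le>N. real (N choose K) * a^K * (1-a)^(N-K)) = 1"
  using binomial_ring[of a "1-a" N] by simp

lemma binom_inv:
  fixes a :: real
  assumes "0 < a" "a < 1"
  shows "(\<Sum>K\<le>N. real (N choose K) * a^K * (1-a)^(N-K) / (real K + 1)) \<le> 1 / ((real N + 1) * a)"
proof -
  define f where "f j = real (Suc N choose j) * a^j * (1-a)^(Suc N - j)" for j
  have fnn: "0 \<le> f j" for j unfolding f_def using assms by simp
  have "(\<Sum>K\<le>N. real (N choose K) * a^K * (1-a)^(N-K) / (real K + 1)) = (\<Sum>K\<le>N. f (Suc K) / ((real N + 1) * a))"
  proof (intro sum.cong refl)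
    fix K assume "K \<in> {..N}"
    have e: "real (Suc K) * real (Suc N choose Suc K) = real (Suc N) * real (N choose K)"
      using Suc_times_binomial[of K N] by (metis of_nat_mult)
    then have e': "real (Suc N choose Suc K) = (real N + 1) * real (N choose K) / (real K + 1)"
      by (simp del: binomial_Suc_Suc add: field_simps)
    show "real (N choose K) * a^K * (1-a)^(N-K) / (real K + 1) = f (Suc K) / ((real N + 1) * a)"
    proof -
      have p: "real K + 1 > 0" "real N + 1 > 0" by simp_all
      have "f (Suc K) = real (Suc N choose Suc K) * (a * a^K) * (1-a)^(N-K)" unfolding f_def by simp
      also have "\<dots> = ((real N + 1) * a) * (real (N choose K) * a^K * (1-a)^(N-K) / (real K + 1))"
        unfolding e' by (simp add: field_simps)
      finally show ?thesis using assms p by simp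
    qed
  qed
  also have "\<dots> = (\<Sum>K\<le>N. f (Suc K)) / ((real N + 1) * a)" by (simp add: sum_divide_distrib)
  also have "(\<Sum>K\<le>N. f (Suc K)) \<le> 1"
  proof -
    have "(\<Sum>K\<le>Suc N. f K) = f 0 + (\<Sum>K\<le>N. f (Suc K))" by (rule sum.atMost_Suc_shift)
    moreover have "(\<Sum>K\<le>Suc N. f K) = 1" unfolding f_def by (rule binom_sum1)
    ultimately show ?thesis using fnn[of 0] by linarith
  qed
  then have "(\<Sum>K\<le>N. f (Suc K)) / ((real N + 1) * a) \<le> 1 / ((real N + 1) * a)"
    using assms by (intro divide_right_mono) auto
  finally show ?thesis .
qed

lemma coeff_mult_nonneg:
  fixes p r :: "real poly"
  assumes "\<And>i. 0 \<le> coeff p i" "\<And>i. 0 \<le> coeff r i"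
  shows "0 \<le> coeff (p * r) n"
  unfolding coeff_mult using assms by (intro sum_nonneg mult_nonneg_nonneg) auto

lemma coeff_power_nonneg:
  fixes p :: "real poly"
  assumes "\<And>i. 0 \<le> coeff p i"
  shows "0 \<le> coeff (p ^ k) n"
proof (induction k arbitrary: n)
  case 0 then show ?case by (simp add: coeff_1)
next
  case (Suc k) then show ?case using assms by (simp add: coeff_mult_nonneg)
qed

lemma sum_coeff_le_poly1:
  fixes r :: "real poly"
  assumes "\<And>i. 0 \<le> coeff r i"
  shows "(\<Sum>i\<le>s. coeff r i) \<le> poly r 1"
proof -
  define d where "d = degree r"
  have "(\<Sum>i\<le>s. coeff r i) \<le> (\<Sum>i\<le>max s d. coeff r i)"
    using assms by (intro sum_mono2) auto
  also have "\<dots> = (\<Sum>i\<le>d. coeff r i)"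
  proof (rule sum.mono_neutral_right)
    show "\<forall>i\<in>{..max s d} - {..d}. coeff r i = 0" unfolding d_def by (auto intro: coeff_eq_0)
  qed auto
  also have "\<dots> = poly r 1" unfolding d_def by (simp add: poly_altdef)
  finally show ?thesis .
qed

lemma coeff_mult_le:
  fixes p r :: "real poly"
  assumes "\<And>i. 0 \<le> coeff p i" "\<And>i. coeff p i \<le> \<beta>" "\<And>i. 0 \<le> coeff r i"
  shows "coeff (p * r) s \<le> \<beta> * poly r 1"
proof -
  have b: "0 \<le> \<beta>" using assms(1)[of 0] assms(2)[of 0] by linarith
  have "coeff (p * r) s = coeff (r * p) s" by (simp add: mult.commute)
  also have "\<dots> = (\<Sum>i\<le>s. coeff r i * coeff p (s - i))" by (rule coeff_mult)
  also have "\<dots> \<le> (\<Sum>i\<le>s. coeff r i * \<beta>)"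
    using assms by (intro sum_mono mult_left_mono) auto
  also have "\<dots> = \<beta> * (\<Sum>i\<le>s. coeff r i)" by (simp add: sum_distrib_left mult.commute)
  also have "\<dots> \<le> \<beta> * poly r 1" using b sum_coeff_le_poly1[OF assms(3)] by (rule mult_left_mono[rotated])
  finally show ?thesis .
qed

lemma mix_bound:
  fixes B R :: "real poly" and a :: real
  assumes a: "0 < a" "a < 1"
    and Bnn: "\<And>K j. 0 \<le> coeff (B^K) j" and Bb: "\<And>K j. coeff (B^K) j \<le> \<beta> K"
    and Rnn: "\<And>i. 0 \<le> coeff R i" and R1: "poly R 1 = 1"
  shows "coeff ((smult a B + smult (1-a) R)^N) s \<le> (\<Sum>K\<le>N. real (N choose K) * a^K * (1-a)^(N-K) * \<beta> K)"
proof -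
  have "(smult a B + smult (1-a) R)^N = (\<Sum>K\<le>N. of_nat (N choose K) * (smult a B)^K * (smult (1-a) R)^(N-K))"
    by (rule binomial_ring)
  also have "\<dots> = (\<Sum>K\<le>N. smult (real (N choose K) * a^K * (1-a)^(N-K)) (B^K * R^(N-K)))"
    by (intro sum.cong refl) (simp add: smult_power of_nat_poly mult_ac)
  finally have e: "coeff ((smult a B + smult (1-a) R)^N) s = (\<Sum>K\<le>N. real (N choose K) * a^K * (1-a)^(N-K) * coeff (B^K * R^(N-K)) s)"
    by (simp add: coeff_sum)
  have "coeff (B^K * R^(N-K)) s \<le> \<beta> K" for K
  proof -
    have "coeff (B^K * R^(N-K)) s \<le> \<beta> K * poly (R^(N-K)) 1"
      using Bnn Bb coeff_power_nonneg[OF Rnn] by (rule coeff_mult_le)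
    then show ?thesis using R1 by simp
  qed
  then have "(\<Sum>K\<le>N. real (N choose K) * a^K * (1-a)^(N-K) * coeff (B^K * R^(N-K)) s) \<le>
      (\<Sum>K\<le>N. real (N choose K) * a^K * (1-a)^(N-K) * \<beta> K)"
    using a by (intro sum_mono mult_left_mono) auto
  then show ?thesis using e by simp
qed

lemma anticonc:
  fixes x \<theta> :: real and q :: nat
  assumes x: "0 < x" "x < 1" and q: "2 \<le> q" and \<theta>: "0 < \<theta>"
  shows "\<exists>N0. \<forall>N\<ge>N0. \<forall>s. coeff ((\<Sum>k<q. monom (x^k) k)^N) s \<le> \<theta> * (\<Sum>k<q. x^k)^N"
proof -
  define P where "P = (\<Sum>k<q. monom (x^k) k)"
  define S where "S = (\<Sum>k<q. x^k)"
  have coeffP: "coeff P k = (if k < q then x^k else 0)" for k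
    unfolding P_def by (simp add: coeff_sum)
  have "(\<Sum>k\<in>{0,1}. x^k) \<le> S" unfolding S_def using q x by (intro sum_mono2) auto
  then have S1: "1 + x \<le> S" by simp
  have Spos: "0 < S" using S1 x by linarith
  define a where "a = 2*x/S"
  have a: "0 < a" "a < 1" unfolding a_def using x Spos S1 by (auto simp: field_simps)
  define Q where "Q = smult (1/S) P"
  define B where "B = [:1/2, 1/2::real:]"
  define R where "R = smult (1/(1-a)) (Q - smult a B)"
  have QBR: "Q = smult a B + smult (1-a) R" unfolding R_def using a by simp
  have coeffQ: "coeff Q k = (if k < q then x^k / S else 0)" for k
    unfolding Q_def by (simp add: coeffP)
  have coeffB: "coeff B k = (if k = 0 \<or> k = 1 then 1/2 else 0)" for k
    unfolding B_def by (cases k; cases "k - 1") (auto simp: coeff_pCons split: nat.splits)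
  have Rnn: "0 \<le> coeff R k" for k
  proof -
    have e: "coeff R k = (coeff Q k - a * coeff B k) / (1 - a)" unfolding R_def by simp
    have "a * coeff B k \<le> coeff Q k"
    proof (cases "k = 0 \<or> k = 1")
      case True
      then show ?thesis unfolding coeffQ coeffB a_def using q x Spos by (auto simp: field_simps)
    next
      case False then show ?thesis unfolding coeffQ coeffB using x Spos by simp
    qed
    then show ?thesis unfolding e using a by simp
  qed
  have polyP: "poly P 1 = S" unfolding P_def S_def by (simp add: poly_sum poly_monom)
  have R1: "poly R 1 = 1"
  proof -
    have "poly Q 1 = 1" unfolding Q_def using polyP Spos by simp
    moreover have "poly B 1 = 1" unfolding B_def by simp
    ultimately show ?thesis unfolding R_def using a by simp
  qed
  have coeffBK: "coeff (B^K) j = (if j \<le> K then real (K choose j) / 2^K else 0)" for K j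
  proof (cases "j \<le> K")
    case True
    then have "coeff (B^K) j = real (K choose j) * (1/2)^j * (1/2)^(K-j)"
      unfolding B_def by (rule coeff_linear_poly_power)
    also have "\<dots> = real (K choose j) * (1/2)^(j + (K-j))" by (simp add: power_add)
    also have "\<dots> = real (K choose j) / 2^K" using True by (simp add: power_divide)
    finally show ?thesis using True by simp
  next
    case False
    have "degree (B^K) \<le> degree B * K" by (rule degree_power_le)
    also have "degree B = 1" unfolding B_def by simp
    finally have "degree (B^K) < j" using False by simp
    then show ?thesis using False by (simp add: coeff_eq_0)
  qed
  have Bnn: "0 \<le> coeff (B^K) j" for K j unfolding coeffBK by simp
  define \<delta> where "\<delta> = \<theta> / 2"
  have \<delta>: "0 < \<delta>" unfolding \<delta>_def using \<theta> by simp
  define K0 where "K0 = nat \<lceil>2 / \<delta>^2\<rceil>"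
  have K0: "2 / \<delta>^2 \<le> real K0" unfolding K0_def by linarith
  define \<beta> where "\<beta> K = (if K0 \<le> K then \<delta> else 1)" for K
  have Bb: "coeff (B^K) j \<le> \<beta> K" for K j
  proof (cases "j \<le> K")
    case False then show ?thesis unfolding coeffBK \<beta>_def using \<delta> by simp
  next
    case True
    define v where "v = real (K choose j) / 2^K"
    have v0: "0 \<le> v" unfolding v_def by simp
    have v1: "v \<le> 1" unfolding v_def using binomial_le_pow2[of K j]
      by (simp add: field_simps)
    have "v \<le> \<delta>" if "K0 \<le> K"
    proof -
      have "v^2 \<le> 2 / (real K + 1)" unfolding v_def by (rule binom_sq_real)
      also have "\<dots> \<le> 2 / (real K0 + 1)" by (rule divide_left_mono) (use that in auto)
      also have "\<dots> \<le> 2 / (2 / \<delta>^2)" by (rule divide_left_mono) (use K0 \<delta> in auto)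
      also have "\<dots> = \<delta>^2" using \<delta> by simp
      finally have "v^2 \<le> \<delta>^2" .
      moreover have "0 \<le> \<delta>" using \<delta> by simp
      ultimately show ?thesis by (rule power2_le_imp_le)
    qed
    then have vb: "v \<le> \<beta> K" using v1 unfolding \<beta>_def by simp
    have "coeff (B^K) j = v" using True unfolding coeffBK v_def by simp
    then show ?thesis using vb by simp
  qed
  define N0 where "N0 = nat \<lceil>real K0 / (a * \<delta>)\<rceil>"
  have "\<forall>N\<ge>N0. \<forall>s. coeff (P^N) s \<le> \<theta> * S^N"
  proof (intro allI impI)
    fix N s assume N: "N0 \<le> N"
    define w where "w K = real (N choose K) * a^K * (1-a)^(N-K)" for K
    have wnn: "0 \<le> w K" for K unfolding w_def using a by simp
    have "coeff (Q^N) s \<le> (\<Sum>K\<le>N. w K * \<beta> K)"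
      unfolding QBR w_def by (rule mix_bound[OF a Bnn Bb Rnn R1])
    also have "\<dots> \<le> (\<Sum>K\<le>N. w K * (\<delta> + real K0 / (real K + 1)))"
    proof (intro sum_mono mult_left_mono wnn)
      fix K show "\<beta> K \<le> \<delta> + real K0 / (real K + 1)"
      proof (cases "K0 \<le> K")
        case True then show ?thesis unfolding \<beta>_def by simp
      next
        case False
        then have "real K + 1 \<le> real K0" by simp
        then have h: "1 \<le> real K0 / (real K + 1)" by simp
        have "\<beta> K = 1" unfolding \<beta>_def using False by simp
        then show ?thesis using h \<delta> by linarith
      qed
    qed
    also have "\<dots> = \<delta> * (\<Sum>K\<le>N. w K) + real K0 * (\<Sum>K\<le>N. w K / (real K + 1))"
      by (simp add: distrib_left sum.distrib sum_distrib_left mult_ac)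
    also have "(\<Sum>K\<le>N. w K) = 1" unfolding w_def by (rule binom_sum1)
    also have "(\<Sum>K\<le>N. w K / (real K + 1)) \<le> 1 / ((real N + 1) * a)"
      unfolding w_def by (rule binom_inv[OF a])
    also have "real K0 * (1 / ((real N + 1) * a)) \<le> \<delta>"
    proof -
      have "real K0 / (a * \<delta>) \<le> real N0" unfolding N0_def by linarith
      also have "\<dots> \<le> real N + 1" using N by simp
      finally have "real K0 \<le> (real N + 1) * a * \<delta>" using a \<delta> by (simp add: field_simps)
      moreover have "0 < (real N + 1) * a" using a by simp
      ultimately show ?thesis by (simp add: pos_divide_le_eq mult_ac)
    qed
    finally have cQ: "coeff (Q^N) s \<le> \<theta>" unfolding \<delta>_def using K0 by (simp add: mult_left_mono)
    have "P = smult S Q" unfolding Q_def using Spos by simp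
    then have "coeff (P^N) s = S^N * coeff (Q^N) s" by (simp add: smult_power)
    also have "\<dots> \<le> S^N * \<theta>" using cQ Spos by (intro mult_left_mono) auto
    finally show "coeff (P^N) s \<le> \<theta> * S^N" by (simp add: mult.commute)
  qed
  then show ?thesis unfolding P_def S_def by blast
qed

lemma prod_monom:
  fixes f :: "'i \<Rightarrow> 'a::comm_semiring_1"
  assumes "finite A"
  shows "(\<Prod>a\<in>A. monom (f a) (g a)) = monom (\<Prod>a\<in>A. f a) (\<Sum>a\<in>A. g a)"
  using assms by (induction A rule: finite_induct) (simp_all add: mult_monom)

lemma count_coeff:
  fixes x :: real and I :: "'i set"
  assumes I: "finite I"
  shows "coeff ((\<Sum>k<q. monom (x^k) k)^(card I)) s = real (card {e \<in> I \<rightarrow>\<^sub>E {..<q}. (\<Sum>t\<in>I. e t) = s}) * x^s"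
proof -
  define X where "X = I \<rightarrow>\<^sub>E {..<q}"
  have finX: "finite X" unfolding X_def using I by (simp add: finite_PiE)
  have "(\<Sum>k<q. monom (x^k) k)^(card I) = (\<Prod>t\<in>I. \<Sum>k<q. monom (x^k) k)" by simp
  also have "\<dots> = (\<Sum>e\<in>X. \<Prod>t\<in>I. monom (x^(e t)) (e t))"
    unfolding X_def using I by (intro prod_sum_PiE) auto
  also have "\<dots> = (\<Sum>e\<in>X. monom (x^(\<Sum>t\<in>I. e t)) (\<Sum>t\<in>I. e t))"
    using I by (intro sum.cong refl) (simp add: prod_monom power_sum)
  finally have e: "coeff ((\<Sum>k<q. monom (x^k) k)^(card I)) s = (\<Sum>e\<in>X. if (\<Sum>t\<in>I. e t) = s then x^(\<Sum>t\<in>I. e t) else 0)"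
    by (simp add: coeff_sum)
  also have "\<dots> = (\<Sum>e\<in>X. if (\<Sum>t\<in>I. e t) = s then x^s else 0)"
    by (intro sum.cong refl) auto
  also have "\<dots> = (\<Sum>e\<in>X \<inter> {e. (\<Sum>t\<in>I. e t) = s}. x^s)"
    using sum.inter_restrict[OF finX, of "\<lambda>_. x^s" "{e. (\<Sum>t\<in>I. e t) = s}"] by (simp only: mem_Collect_eq)
  also have "\<dots> = real (card (X \<inter> {e. (\<Sum>t\<in>I. e t) = s})) * x^s" by simp
  also have "X \<inter> {e. (\<Sum>t\<in>I. e t) = s} = {e \<in> I \<rightarrow>\<^sub>E {..<q}. (\<Sum>t\<in>I. e t) = s}" unfolding X_def by auto
  finally show ?thesis .
qed

lemma geom_inv_bound:
  fixes x :: real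
  assumes "0 < x" "x < 1"
  shows "(1 - x) * (\<Sum>s\<le>m. (1/x)^s) \<le> (1/x)^m"
proof (induction m)
  case 0 then show ?case using assms by simp
next
  case (Suc m)
  have "(1 - x) * (\<Sum>s\<le>Suc m. (1/x)^s) = (1 - x) * (\<Sum>s\<le>m. (1/x)^s) + (1 - x) * (1/x)^Suc m"
    by (simp add: distrib_left)
  also have "\<dots> \<le> (1/x)^m + (1 - x) * (1/x)^Suc m" using Suc by simp
  also have "(1 - x) * (1/x)^Suc m = (1/x)^Suc m - (1/x)^m" using assms by (simp add: field_simps)
  finally show ?case by simp
qed

lemma count_bound:
  fixes x \<theta> :: real and I :: "'i set"
  assumes I: "finite I" and x: "0 < x" "x < 1" and q: "2 \<le> q"
    and cb: "\<forall>s. coeff ((\<Sum>k<q. monom (x^k) k)^(card I)) s \<le> \<theta> * (\<Sum>k<q. x^k)^(card I)"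
  shows "real (card {e \<in> I \<rightarrow>\<^sub>E {..<q}. 3 * (\<Sum>t\<in>I. e t) \<le> (q - 1) * card I})
           \<le> \<theta> * ((\<Sum>k<q. x^k) / x powr ((real q - 1) / 3)) ^ (card I) / (1 - x)"
proof -
  define N where "N = card I"
  define S where "S = (\<Sum>k<q. x^k)"
  define X where "X = I \<rightarrow>\<^sub>E {..<q}"
  define m where "m = (q - 1) * N div 3"
  define M where "M = {e \<in> X. 3 * (\<Sum>t\<in>I. e t) \<le> (q - 1) * N}"
  have finX: "finite X" unfolding X_def using I by (simp add: finite_PiE)
  have finM: "finite M" unfolding M_def using finX by simp
  have Spos: "0 < S" unfolding S_def using q x by (intro sum_pos2[of _ 0]) auto
  have M': "M = {e \<in> X. (\<Sum>t\<in>I. e t) \<le> m}" unfolding M_def m_def by auto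
  have "card M = (\<Sum>e\<in>M. 1)" by simp
  also have "\<dots> = (\<Sum>s\<in>{..m}. \<Sum>e\<in>{e\<in>M. (\<Sum>t\<in>I. e t) = s}. 1)"
    by (rule sum.group[OF finM, symmetric]) (auto simp: M')
  also have "\<dots> = (\<Sum>s\<le>m. card {e \<in> X. (\<Sum>t\<in>I. e t) = s})"
  proof (intro sum.cong refl)
    fix s assume "s \<in> {..m}"
    then have "{e\<in>M. (\<Sum>t\<in>I. e t) = s} = {e \<in> X. (\<Sum>t\<in>I. e t) = s}" unfolding M' by auto
    then show "(\<Sum>e\<in>{e\<in>M. (\<Sum>t\<in>I. e t) = s}. 1) = card {e \<in> X. (\<Sum>t\<in>I. e t) = s}" by simp
  qed
  finally have cM: "real (card M) = (\<Sum>s\<le>m. real (card {e \<in> X. (\<Sum>t\<in>I. e t) = s}))" by simp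
  have each: "real (card {e \<in> X. (\<Sum>t\<in>I. e t) = s}) \<le> \<theta> * S^N * (1/x)^s" for s
  proof -
    have "real (card {e \<in> X. (\<Sum>t\<in>I. e t) = s}) * x^s = coeff ((\<Sum>k<q. monom (x^k) k)^(card I)) s"
      using count_coeff[OF I, where q=q and x=x and s=s] unfolding X_def by simp
    also have "\<dots> \<le> \<theta> * S^N" using cb unfolding S_def N_def by blast
    finally have "real (card {e \<in> X. (\<Sum>t\<in>I. e t) = s}) * x^s \<le> \<theta> * S^N" .
    then show ?thesis using x by (simp add: field_simps power_one_over)
  qed
  have "real (card M) \<le> (\<Sum>s\<le>m. \<theta> * S^N * (1/x)^s)" unfolding cM by (intro sum_mono each)
  also have "\<dots> = \<theta> * S^N * (\<Sum>s\<le>m. (1/x)^s)" by (simp add: sum_distrib_left)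
  finally have c1: "real (card M) \<le> \<theta> * S^N * (\<Sum>s\<le>m. (1/x)^s)" .
  have th: "0 \<le> \<theta>"
  proof -
    have "0 \<le> real (card {e \<in> X. (\<Sum>t\<in>I. e t) = 0}) * x^0" by simp
    also have "\<dots> = coeff ((\<Sum>k<q. monom (x^k) k)^(card I)) 0"
      using count_coeff[OF I, where q=q and x=x and s=0] unfolding X_def by simp
    also have "\<dots> \<le> \<theta> * S^N" using cb unfolding S_def N_def by blast
    finally have h: "0 \<le> \<theta> * S^N" .
    have "0 < S^N" using Spos by simp
    then show ?thesis using h zero_le_mult_iff[of \<theta> "S^N"] by linarith
  qed
  have g: "(\<Sum>s\<le>m. (1/x)^s) \<le> (1/x)^m / (1 - x)"
    using geom_inv_bound[OF x, of m] x by (simp add: field_simps)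
  have D: "(1/x)^m \<le> inverse (x powr ((real q - 1) / 3)) ^ N"
  proof -
    have "(1/x)^m = x powr (- real m)" using x by (simp add: powr_minus powr_realpow power_one_over inverse_eq_divide)
    also have "\<dots> \<le> x powr (- ((real q - 1) / 3 * real N))"
    proof (rule powr_mono')
      have "3 * m \<le> (q - 1) * N" unfolding m_def by simp
      then have "3 * real m \<le> real (q - 1) * real N" by (metis of_nat_le_iff of_nat_mult of_nat_numeral)
      then show "- ((real q - 1) / 3 * real N) \<le> - real m" using q by (simp add: of_nat_diff)
    qed (use x in auto)
    also have "\<dots> = inverse (x powr ((real q - 1) / 3)) ^ N"
    proof -
      have "(x powr ((real q - 1) / 3))^N = (x powr ((real q - 1) / 3)) powr real N"
        by (rule powr_realpow[symmetric]) (use x in simp)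
      also have "\<dots> = x powr ((real q - 1) / 3 * real N)" by (rule powr_powr)
      finally have pw: "x powr ((real q - 1) / 3 * real N) = (x powr ((real q - 1) / 3))^N" by simp
      show ?thesis unfolding powr_minus pw by (simp add: power_inverse)
    qed
    finally show ?thesis .
  qed
  have "real (card M) \<le> \<theta> * S^N * ((1/x)^m / (1 - x))"
    using c1 g th Spos by (meson mult_left_mono order_trans zero_le_mult_iff zero_le_power less_imp_le)
  also have "\<dots> \<le> \<theta> * S^N * (inverse (x powr ((real q - 1) / 3)) ^ N / (1 - x))"
    using D x th Spos by (intro mult_left_mono divide_right_mono) auto
  also have "\<dots> = \<theta> * (S / x powr ((real q - 1) / 3)) ^ N / (1 - x)"
    by (simp add: power_divide field_simps power_inverse)
  finally show ?thesis unfolding M_def X_def S_def N_def .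
qed

lemma sum_lt_real: "(\<Sum>k<q. real k) * 2 = real q * (real q - 1)"
  by (induction q) (simp_all add: algebra_simps)

lemma minimizer:
  fixes q :: nat
  assumes q: "2 \<le> q"
  shows "\<exists>x0. 0 < x0 \<and> x0 < 1 \<and>
     (\<forall>y. 0 < y \<and> y < 1 \<longrightarrow> (\<Sum>k<q. x0^k) / x0 powr ((real q - 1)/3) \<le> (\<Sum>k<q. y^k) / y powr ((real q - 1)/3))"
proof -
  define c where "c = (real q - 1) / 3"
  have c: "0 < c" unfolding c_def using q by simp
  define g where "g x = (\<Sum>k<q. x^k) / x powr c" for x :: real
  have g1: "g 1 = real q" unfolding g_def by simp
  have D: "(g has_real_derivative ((\<Sum>k<q. real k * 1 ^ (k - Suc 0)) * 1 powr c - (\<Sum>k<q. 1^k) * (c * 1 powr (c - 1))) / (1 powr c * 1 powr c)) (at 1)"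
    unfolding g_def
    by (intro DERIV_divide DERIV_sum DERIV_pow has_real_derivative_powr) auto
  have "(\<Sum>k<q. real k * 1 ^ (k - Suc 0)) = (\<Sum>k<q. real k)" by simp
  then have Dv: "((\<Sum>k<q. real k * 1 ^ (k - Suc 0)) * 1 powr c - (\<Sum>k<q. 1^k) * (c * 1 powr (c - 1))) / (1 powr c * 1 powr c)
      = real q * (real q - 1) / 6"
    using sum_lt_real[of q] unfolding c_def by (simp add: field_simps)
  have "0 < real q * (real q - 1) / 6" using q by simp
  then obtain d where d: "d > 0" "\<forall>h>0. h < d \<longrightarrow> g (1 - h) < g 1"
    using DERIV_pos_inc_left[OF D] Dv by auto
  define x1 where "x1 = 1 - min (d/2) (1/2)"
  have x1: "0 < x1" "x1 < 1" "g x1 < real q" unfolding x1_def using d g1 by auto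
  define a where "a = (1 / real q) powr (1 / c)"
  have a0: "0 < a" unfolding a_def using q by simp
  have apc: "a powr c = 1 / real q" unfolding a_def using q c by (simp add: powr_powr)
  have a1: "a < 1"
  proof -
    have "a = (1 / real q) powr (1 / c)" by (rule a_def)
    also have "\<dots> < 1 powr (1 / c)" using q c by (intro powr_less_mono2) auto
    finally show ?thesis by simp
  qed
  have small: "real q \<le> g y" if "0 < y" "y \<le> a" for y
  proof -
    have "y powr c \<le> a powr c" using that c by (intro powr_mono2) auto
    then have yc: "y powr c \<le> 1 / real q" using apc by simp
    have ypos: "0 < y powr c" using that by simp
    have "1 \<le> (\<Sum>k<q. y^k)"
    proof -
      have "(\<Sum>k\<in>{0}. y^k) \<le> (\<Sum>k<q. y^k)" using q that by (intro sum_mono2) auto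
      then show ?thesis by simp
    qed
    then have "1 / y powr c \<le> g y" unfolding g_def using ypos by (intro divide_right_mono) auto
    moreover have "real q \<le> 1 / y powr c" using yc ypos q by (simp add: field_simps)
    ultimately show ?thesis by linarith
  qed
  have cont: "continuous_on {a..1} g"
    unfolding g_def using a0 by (intro continuous_intros) auto
  obtain x0 where x0: "x0 \<in> {a..1}" "\<forall>y\<in>{a..1}. g x0 \<le> g y"
    using continuous_attains_inf[OF compact_Icc _ cont] a1 by auto
  have "a < x1" using small[of x1] x1 by (cases "x1 \<le> a") auto
  then have "g x0 \<le> g x1" using x0 x1 by auto
  then have gx0: "g x0 < real q" using x1 by simp
  have "x0 \<noteq> 1" using gx0 g1 by auto
  then have x0i: "0 < x0" "x0 < 1" using x0 a0 by auto
  have "\<forall>y::real. 0 < y \<and> y < 1 \<longrightarrow> g x0 \<le> g y"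
  proof (intro allI impI)
    fix y :: real assume y: "0 < y \<and> y < 1"
    show "g x0 \<le> g y"
    proof (cases "a \<le> y")
      case True then show ?thesis using x0 y by auto
    next
      case False then show ?thesis using small[of y] y gx0 by auto
    qed
  qed
  then show ?thesis using x0i unfolding g_def c_def by blast
qed

theorem lemma3p3:
  fixes \<alpha> \<beta> :: "'a::{field, finite}"
    and x y :: "nat \<Rightarrow> 'a ^ 'n"
    and L q :: nat
  assumes "q = CARD('a)"
    and "\<exists>p k. prime p \<and> k \<ge> 1 \<and> q = p ^ k"
    and "\<alpha> \<noteq> 0" and "\<beta> \<noteq> 0"
    and "inj_on x {..<L}" and "inj_on y {..<L}"
    and "real L \<ge> (Gamma_q q) ^ CARD('n)"
  shows "\<exists>i<L. \<exists>i'<L. \<exists>i''<L. i \<noteq> i' \<and> i \<noteq> i'' \<and>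
           \<alpha> *s x i + \<beta> *s y i = \<alpha> *s x i' + \<beta> *s y i''"
proof (rule ccontr)
  assume neg: "\<not> ?thesis"
  note qdef = assms(1)
  have q2: "2 \<le> q" unfolding qdef by (rule card_field_ge2)
  define n where "n = CARD('n)"
  have n1: "1 \<le> n" unfolding n_def by (simp add: Suc_leI)
  define g where "g x = (\<Sum>k<q. x^k) / x powr ((real q - 1)/3)" for x :: real
  obtain x0 where x0: "0 < x0" "x0 < 1" and x0min: "\<forall>y. 0 < y \<and> y < 1 \<longrightarrow> g x0 \<le> g y"
    using minimizer[OF q2] unfolding g_def by blast
  have Gam: "Gamma_q q = g x0"
  proof -
    have "Gamma_q q = (INF x\<in>{0<..<(1::real)}. g x)"
      unfolding Gamma_q_def J_def g_def using q2 by simp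
    also have "\<dots> = g x0"
      unfolding image_def by (rule cInf_eq_minimum) (use x0 x0min in auto)
    finally show ?thesis .
  qed
  define S where "S = (\<Sum>k<q. x0^k)"
  have Spos: "0 < S" unfolding S_def using q2 x0 by (intro sum_pos2[of _ 0]) auto
  have gpos: "0 < g x0" unfolding g_def using Spos x0 S_def by simp
  define \<theta> where "\<theta> = (1 - x0) / 4"
  have \<theta>: "0 < \<theta>" unfolding \<theta>_def using x0 by simp
  obtain N0 where N0: "\<forall>N\<ge>N0. \<forall>s. coeff ((\<Sum>k<q. monom (x0^k) k)^N) s \<le> \<theta> * (\<Sum>k<q. x0^k)^N"
    using anticonc[OF x0 q2 \<theta>] by blast
  define k where "k = Suc N0"
  define P where "P = {..<k} \<rightarrow>\<^sub>E {..<L}"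
  define I where "I = (UNIV :: 'n set) \<times> {..<k}"
  define a' where "a' \<sigma> p = \<alpha> * (x (\<sigma> (snd p)) $ fst p)" for \<sigma> :: "nat \<Rightarrow> nat" and p :: "'n \<times> nat"
  define b' where "b' \<sigma> p = \<beta> * (y (\<sigma> (snd p)) $ fst p)" for \<sigma> :: "nat \<Rightarrow> nat" and p :: "'n \<times> nat"
  define c' where "c' \<sigma> p = - (\<alpha> * (x (\<sigma> (snd p)) $ fst p) + \<beta> * (y (\<sigma> (snd p)) $ fst p))" for \<sigma> :: "nat \<Rightarrow> nat" and p :: "'n \<times> nat"
  have finP: "finite P" unfolding P_def by (simp add: finite_PiE)
  have finI: "finite I" unfolding I_def by simp
  have tri: "(\<forall>p\<in>I. a' s1 p + b' s2 p + c' s3 p = 0) \<longleftrightarrow> (s1 = s2 \<and> s2 = s3)"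
    if s: "s1 \<in> P" "s2 \<in> P" "s3 \<in> P" for s1 s2 s3
  proof
    assume "s1 = s2 \<and> s2 = s3"
    then show "\<forall>p\<in>I. a' s1 p + b' s2 p + c' s3 p = 0" unfolding a'_def b'_def c'_def by simp
  next
    assume h: "\<forall>p\<in>I. a' s1 p + b' s2 p + c' s3 p = 0"
    have pt: "s1 r = s2 r \<and> s2 r = s3 r" if r: "r < k" for r
    proof -
      define i where "i = s1 r"
      define j where "j = s2 r"
      define l where "l = s3 r"
      have ijl: "i < L" "j < L" "l < L" using s r unfolding i_def j_def l_def P_def by (auto simp: PiE_iff)
      have comp: "\<alpha> * (x i $ t) + \<beta> * (y j $ t) = \<alpha> * (x l $ t) + \<beta> * (y l $ t)" for t
      proof -
        have "(t, r) \<in> I" unfolding I_def using r by simp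
        then have "a' s1 (t,r) + b' s2 (t,r) + c' s3 (t,r) = 0" using h by blast
        then show ?thesis unfolding a'_def b'_def c'_def i_def j_def l_def by (simp add: algebra_simps)
      qed
      have veq: "\<alpha> *s x l + \<beta> *s y l = \<alpha> *s x i + \<beta> *s y j"
        using comp by (simp add: vec_eq_iff)
      have "l = i \<or> l = j" using neg ijl veq by blast
      then have "i = j \<and> j = l"
      proof
        assume li: "l = i"
        have "\<beta> * (y j $ t) = \<beta> * (y l $ t)" for t using comp[of t] li by simp
        then have "y j = y l" using assms(4) by (simp add: vec_eq_iff)
        then have "j = l" using assms(6) ijl by (auto dest: inj_onD)
        then show ?thesis using li by simp
      next
        assume lj: "l = j"
        have "\<alpha> * (x i $ t) = \<alpha> * (x l $ t)" for t using comp[of t] lj by simp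
        then have "x i = x l" using assms(3) by (simp add: vec_eq_iff)
        then have "i = l" using assms(5) ijl by (auto dest: inj_onD)
        then show ?thesis using lj by simp
      qed
      then show ?thesis unfolding i_def j_def l_def by simp
    qed
    have "s1 = s2"
    proof
      fix r show "s1 r = s2 r"
        using pt[of r] s unfolding P_def by (cases "r < k") (auto simp: PiE_def extensional_def)
    qed
    moreover have "s2 = s3"
    proof
      fix r show "s2 r = s3 r"
        using pt[of r] s unfolding P_def by (cases "r < k") (auto simp: PiE_def extensional_def)
    qed
    ultimately show "s1 = s2 \<and> s2 = s3" by simp
  qed
  have cardP: "card P = L^k" unfolding P_def by (simp add: card_PiE)
  have cardI: "card I = n * k" unfolding I_def n_def by (simp add: card_cartesian_product)
  define M where "M = {e \<in> I \<rightarrow>\<^sub>E {..<q}. 3 * (\<Sum>t\<in>I. e t) \<le> (q - 1) * card I}"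
  have b1: "card P \<le> 3 * card M"
    unfolding M_def qdef by (rule tricolor_bound[OF finP finI tri])
  have "k \<le> n * k" using n1 by simp
  then have "n * k \<ge> N0" unfolding k_def by linarith
  then have cb: "\<forall>s. coeff ((\<Sum>k<q. monom (x0^k) k)^(card I)) s \<le> \<theta> * (\<Sum>k<q. x0^k)^(card I)"
    using N0 cardI by simp
  have b2: "real (card M) \<le> \<theta> * (g x0) ^ (card I) / (1 - x0)"
    unfolding M_def g_def by (rule count_bound[OF finI x0 q2 cb])
  have "real L ^ k \<le> 3 * (\<theta> * (g x0) ^ (n * k) / (1 - x0))"
  proof -
    have "real L ^ k = real (card P)" using cardP by simp
    also have "\<dots> \<le> 3 * real (card M)" using b1 by linarith
    also have "\<dots> \<le> 3 * (\<theta> * (g x0) ^ (card I) / (1 - x0))" using b2 by simp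
    finally show ?thesis using cardI by simp
  qed
  also have "\<dots> = 3/4 * (g x0) ^ (n * k)" unfolding \<theta>_def using x0 by (simp add: field_simps)
  finally have up: "real L ^ k \<le> 3/4 * (g x0) ^ (n * k)" .
  have "(g x0) ^ n \<le> real L" using assms(7) Gam n_def by simp
  then have "((g x0) ^ n) ^ k \<le> real L ^ k" by (rule power_mono) (use gpos in auto)
  then have low: "(g x0) ^ (n * k) \<le> real L ^ k" by (simp add: power_mult)
  have "0 < (g x0) ^ (n * k)" using gpos by simp
  with up low show False by linarith
qed

end
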